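(* Let $G_1,\dots,G_n,H$ be non-trivial groups such that each $G_i$ is centreless and directly indecomposable, and such that $H$ has no direct factor isomorphic to any $G_i$. Let $G=G_1\times\cdots\times G_n$. Then the automorphisms of $G\times H$ are exactly the maps $(g,h)\mapsto(\alpha(g),\gamma(g)\delta(h))$ with $\alpha\in\operatorname{Aut}(G)$, $\delta\in\operatorname{Aut}(H)$ and $\gamma\in\operatorname{Hom}(G,Z(H))$. In particular, $1\times H$ is characteristic in $G\times H$.
   Context: A group $A$ is directly indecomposable if $A\cong B\times C$ implies $B=1$ or $C=1$. $H$ has a direct factor isomorphic to $A$ if $H\cong A\times N$ for some group $N$. *)

theory Defs
  imports "HOL-Algebra.Algebra"
begin

definition center :: "('a, 'b) monoid_scheme \<Rightarrow> 'a set" where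
  "center G = {z \<in> carrier G. \<forall>g \<in> carrier G. z \<otimes>\<^bsub>G\<^esub> g = g \<otimes>\<^bsub>G\<^esub> z}"

definition centreless :: "('a, 'b) monoid_scheme \<Rightarrow> bool" where
  "centreless G \<longleftrightarrow> center G = {\<one>\<^bsub>G\<^esub>}"

definition nontrivial_group :: "('a, 'b) monoid_scheme \<Rightarrow> bool" where
  "nontrivial_group G \<longleftrightarrow> carrier G \<noteq> {\<one>\<^bsub>G\<^esub>}"

text \<open>A is directly indecomposable: A \<cong> B \<times> C implies B = 1 or C = 1.
  The factors B, C are taken with elements of the same type as A (every direct
  factor embeds into A, so this loses no generality).\<close>
definition directly_indecomposable :: "('a, 'b) monoid_scheme \<Rightarrow> bool" where
  "directly_indecomposable A \<longleftrightarrow>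
     (\<forall>(B :: 'a monoid) (C :: 'a monoid). group B \<longrightarrow> group C \<longrightarrow> A \<cong> B \<times>\<times> C \<longrightarrow>
        carrier B = {\<one>\<^bsub>B\<^esub>} \<or> carrier C = {\<one>\<^bsub>C\<^esub>})"

text \<open>H has a direct factor isomorphic to A: H \<cong> A \<times> N for some group N
  (N taken with elements of the type of H's elements; N embeds into H).\<close>
definition has_direct_factor_iso :: "('b, 'c) monoid_scheme \<Rightarrow> ('a, 'd) monoid_scheme \<Rightarrow> bool" where
  "has_direct_factor_iso H A \<longleftrightarrow> (\<exists>N :: 'b monoid. group N \<and> H \<cong> A \<times>\<times> N)"

end

theory Submission
  imports Defs
begin


lemma indec_split:
  fixes G :: "'a monoid" (structure)
  assumes grp: "group G" and cl: "centreless G" and di: "directly_indecomposable G"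
   and sB: "subgroup B G" and sC: "subgroup C G"
   and gen: "\<And>g. g \<in> carrier G \<Longrightarrow> \<exists>b\<in>B. \<exists>c\<in>C. g = b \<otimes>\<^bsub>G\<^esub> c"
   and comm: "\<And>b c. b \<in> B \<Longrightarrow> c \<in> C \<Longrightarrow> b \<otimes>\<^bsub>G\<^esub> c = c \<otimes>\<^bsub>G\<^esub> b"
  shows "B = {\<one>\<^bsub>G\<^esub>} \<or> C = {\<one>\<^bsub>G\<^esub>}"
proof -
  interpret group G by (rule grp)
  have Bc: "B \<subseteq> carrier G" using sB subgroup.subset by blast
  have Cc: "C \<subseteq> carrier G" using sC subgroup.subset by blast
  define GB where "GB = G\<lparr>carrier := B\<rparr>"
  define GC where "GC = G\<lparr>carrier := C\<rparr>"
  have gB: "group GB" unfolding GB_def using sB subgroup.subgroup_is_group grp by blast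
  have gC: "group GC" unfolding GC_def using sC subgroup.subgroup_is_group grp by blast
  have inter: "x = \<one>" if "x \<in> B" "x \<in> C" for x
  proof -
    have "x \<in> center G" unfolding center_def
    proof (safe)
      show "x \<in> carrier G" using that Bc by auto
      fix g assume g: "g \<in> carrier G"
      then obtain b c where b: "b \<in> B" and c: "c \<in> C" and gbc: "g = b \<otimes> c" using gen by blast
      have bx: "b \<otimes> x = x \<otimes> b" using comm[OF b that(2)] .
      have xc: "x \<otimes> c = c \<otimes> x" using comm[OF that(1) c] .
      have xg: "x \<in> carrier G" "b \<in> carrier G" "c \<in> carrier G" using that b c Bc Cc by auto
      have "x \<otimes> (b \<otimes> c) = (x \<otimes> b) \<otimes> c" using xg by (simp add: m_assoc)
      also have "\<dots> = b \<otimes> (x \<otimes> c)" using xg bx by (metis m_assoc)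
      also have "\<dots> = (b \<otimes> c) \<otimes> x" using xg xc by (metis m_assoc)
      finally show "x \<otimes> g = g \<otimes> x" using gbc by simp
    qed
    then show ?thesis using cl unfolding centreless_def by auto
  qed
  define f where "f = (\<lambda>(b,c). b \<otimes> c)"
  have "f \<in> iso (GB \<times>\<times> GC) G"
  proof (rule isoI)
    show "f \<in> hom (GB \<times>\<times> GC) G"
    proof (rule homI)
      fix x assume "x \<in> carrier (GB \<times>\<times> GC)"
      then show "f x \<in> carrier G" using Bc Cc unfolding f_def GB_def GC_def by auto
    next
      fix x y assume x: "x \<in> carrier (GB \<times>\<times> GC)" and y: "y \<in> carrier (GB \<times>\<times> GC)"
      obtain b c where xbc: "x = (b,c)" and b: "b \<in> B" and c: "c \<in> C" using x unfolding GB_def GC_def by auto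
      obtain b' c' where ybc: "y = (b',c')" and b': "b' \<in> B" and c': "c' \<in> C" using y unfolding GB_def GC_def by auto
      have cm: "c \<otimes> b' = b' \<otimes> c" using comm[OF b' c] by simp
      have "f (x \<otimes>\<^bsub>GB \<times>\<times> GC\<^esub> y) = (b \<otimes> b') \<otimes> (c \<otimes> c')"
        unfolding xbc ybc f_def GB_def GC_def by simp
      also have "\<dots> = b \<otimes> (b' \<otimes> c) \<otimes> c'" using b c b' c' Bc Cc by (simp add: m_assoc subsetD)
      also have "\<dots> = b \<otimes> (c \<otimes> b') \<otimes> c'" using cm by simp
      also have "\<dots> = f x \<otimes> f y" unfolding xbc ybc f_def using b c b' c' Bc Cc by (simp add: m_assoc subsetD)
      finally show "f (x \<otimes>\<^bsub>GB \<times>\<times> GC\<^esub> y) = f x \<otimes> f y" .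
    qed
  next
    show "bij_betw f (carrier (GB \<times>\<times> GC)) (carrier G)"
    proof (rule bij_betw_imageI)
      show "inj_on f (carrier (GB \<times>\<times> GC))"
      proof (rule inj_onI)
        fix x y assume x: "x \<in> carrier (GB \<times>\<times> GC)" and y: "y \<in> carrier (GB \<times>\<times> GC)" and e: "f x = f y"
        obtain b c where xbc: "x = (b,c)" and b: "b \<in> B" and c: "c \<in> C" using x unfolding GB_def GC_def by auto
        obtain b' c' where ybc: "y = (b',c')" and b': "b' \<in> B" and c': "c' \<in> C" using y unfolding GB_def GC_def by auto
        have e': "b \<otimes> c = b' \<otimes> c'" using e unfolding xbc ybc f_def by simp
        have bg: "b \<in> carrier G" "b' \<in> carrier G" "c \<in> carrier G" "c' \<in> carrier G" using b c b' c' Bc Cc by auto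
        have "inv b' \<otimes> b = c' \<otimes> inv c"
        proof -
          have "inv b' \<otimes> b = inv b' \<otimes> (b \<otimes> c) \<otimes> inv c" using bg by (simp add: m_assoc)
          also have "\<dots> = inv b' \<otimes> (b' \<otimes> c') \<otimes> inv c" using e' by simp
          also have "\<dots> = c' \<otimes> inv c" using bg by (simp add: m_assoc[symmetric])
          finally show ?thesis .
        qed
        moreover have "inv b' \<otimes> b \<in> B" using sB b b' by (simp add: subgroup.m_closed subgroup.m_inv_closed)
        moreover have "c' \<otimes> inv c \<in> C" using sC c c' by (simp add: subgroup.m_closed subgroup.m_inv_closed)
        ultimately have "inv b' \<otimes> b = \<one>" using inter by metis
        then have bb: "b = b'" using bg by (metis inv_equality inv_inv m_closed inv_closed r_one  l_inv_ex)
        then have "c = c'" using e' bg by simp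
        then show "x = y" using bb xbc ybc by simp
      qed
      show "f ` carrier (GB \<times>\<times> GC) = carrier G"
      proof
        show "f ` carrier (GB \<times>\<times> GC) \<subseteq> carrier G" using Bc Cc unfolding f_def GB_def GC_def by auto
        show "carrier G \<subseteq> f ` carrier (GB \<times>\<times> GC)"
        proof
          fix g assume "g \<in> carrier G"
          then obtain b c where "b \<in> B" "c \<in> C" "g = b \<otimes> c" using gen by blast
          then show "g \<in> f ` carrier (GB \<times>\<times> GC)" unfolding f_def GB_def GC_def by force
        qed
      qed
    qed
  qed
  then have "(GB \<times>\<times> GC) \<cong> G" by (rule is_isoI)
  then have "G \<cong> GB \<times>\<times> GC" using group.iso_sym[OF DirProd_group[OF gB gC]] by blast
  then have "carrier GB = {\<one>\<^bsub>GB\<^esub>} \<or> carrier GC = {\<one>\<^bsub>GC\<^esub>}"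
    using di gB gC unfolding directly_indecomposable_def by blast
  then show ?thesis unfolding GB_def GC_def by simp
qed


lemma split_factor:
  fixes H :: "'b monoid" (structure) and S :: "('a,'d) monoid_scheme"
  assumes gH: "group H" and gS: "group S" and rh: "\<rho> \<in> hom H S" and sh: "\<sigma> \<in> hom S H"
   and rs: "\<And>s. s \<in> carrier S \<Longrightarrow> \<rho> (\<sigma> s) = s"
   and cm: "\<And>s n. s \<in> carrier S \<Longrightarrow> n \<in> carrier H \<Longrightarrow> \<rho> n = \<one>\<^bsub>S\<^esub> \<Longrightarrow> \<sigma> s \<otimes> n = n \<otimes> \<sigma> s"
  shows "has_direct_factor_iso H S"
proof -
  interpret group H by (rule gH)
  interpret S: group S by (rule gS)
  interpret gh: group_hom H S \<rho> using gH gS rh by (simp add: group_hom_def group_hom_axioms_def)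
  interpret sg: group_hom S H \<sigma> using gH gS sh by (simp add: group_hom_def group_hom_axioms_def)
  define K where "K = kernel H S \<rho>"
  define N where "N = H\<lparr>carrier := K\<rparr>"
  have sK: "subgroup K H" unfolding K_def by (rule gh.subgroup_kernel)
  have gN: "group N" unfolding N_def using sK subgroup.subgroup_is_group gH by blast
  have Kc: "K \<subseteq> carrier H" using sK subgroup.subset by blast
  have Kd: "n \<in> K \<longleftrightarrow> n \<in> carrier H \<and> \<rho> n = \<one>\<^bsub>S\<^esub>" for n unfolding K_def kernel_def by simp
  define f where "f = (\<lambda>(s,n). \<sigma> s \<otimes> n)"
  have sc: "\<sigma> s \<in> carrier H" if "s \<in> carrier S" for s using sh that by (simp add: hom_in_carrier)
  have "f \<in> iso (S \<times>\<times> N) H"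
  proof (rule isoI)
    show "f \<in> hom (S \<times>\<times> N) H"
    proof (rule homI)
      fix x assume "x \<in> carrier (S \<times>\<times> N)"
      then show "f x \<in> carrier H" using Kc sc unfolding f_def N_def by auto
    next
      fix x y assume x: "x \<in> carrier (S \<times>\<times> N)" and y: "y \<in> carrier (S \<times>\<times> N)"
      obtain s n where xbc: "x = (s,n)" and b: "s \<in> carrier S" and c: "n \<in> K" using x unfolding N_def by auto
      obtain s' n' where ybc: "y = (s',n')" and b': "s' \<in> carrier S" and c': "n' \<in> K" using y unfolding N_def by auto
      have nc: "n \<in> carrier H" "n' \<in> carrier H" using c c' Kc by auto
      have cmm: "\<sigma> s' \<otimes> n = n \<otimes> \<sigma> s'" using cm[OF b'] c Kd by auto
      have "f (x \<otimes>\<^bsub>S \<times>\<times> N\<^esub> y) = \<sigma> (s \<otimes>\<^bsub>S\<^esub> s') \<otimes> (n \<otimes> n')"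
        unfolding xbc ybc f_def N_def by simp
      also have "\<dots> = \<sigma> s \<otimes> (\<sigma> s' \<otimes> n) \<otimes> n'" using b b' nc sc by (simp add: m_assoc)
      also have "\<dots> = \<sigma> s \<otimes> (n \<otimes> \<sigma> s') \<otimes> n'" using cmm by simp
      also have "\<dots> = f x \<otimes> f y" unfolding xbc ybc f_def using b b' nc sc by (simp add: m_assoc)
      finally show "f (x \<otimes>\<^bsub>S \<times>\<times> N\<^esub> y) = f x \<otimes> f y" .
    qed
  next
    show "bij_betw f (carrier (S \<times>\<times> N)) (carrier H)"
    proof (rule bij_betw_imageI)
      show "inj_on f (carrier (S \<times>\<times> N))"
      proof (rule inj_onI)
        fix x y assume x: "x \<in> carrier (S \<times>\<times> N)" and y: "y \<in> carrier (S \<times>\<times> N)" and e: "f x = f y"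
        obtain s n where xbc: "x = (s,n)" and b: "s \<in> carrier S" and c: "n \<in> K" using x unfolding N_def by auto
        obtain s' n' where ybc: "y = (s',n')" and b': "s' \<in> carrier S" and c': "n' \<in> K" using y unfolding N_def by auto
        have nc: "n \<in> carrier H" "n' \<in> carrier H" using c c' Kc by auto
        have e': "\<sigma> s \<otimes> n = \<sigma> s' \<otimes> n'" using e unfolding xbc ybc f_def by simp
        have "\<rho> (\<sigma> s \<otimes> n) = s" using b nc sc rs c Kd by simp
        moreover have "\<rho> (\<sigma> s' \<otimes> n') = s'" using b' nc sc rs c' Kd by simp
        ultimately have ss: "s = s'" using e' by simp
        then have "n = n'" using e' nc sc b by simp
        then show "x = y" using ss xbc ybc by simp
      qed
      show "f ` carrier (S \<times>\<times> N) = carrier H"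
      proof
        show "f ` carrier (S \<times>\<times> N) \<subseteq> carrier H" using Kc sc unfolding f_def N_def by auto
        show "carrier H \<subseteq> f ` carrier (S \<times>\<times> N)"
        proof
          fix h assume h: "h \<in> carrier H"
          define s where "s = \<rho> h"
          have s: "s \<in> carrier S" unfolding s_def using h rh by (simp add: hom_in_carrier)
          define m where "m = inv (\<sigma> s) \<otimes> h"
          have mc: "m \<in> carrier H" unfolding m_def using h s sc by simp
          have "\<rho> m = inv\<^bsub>S\<^esub> (\<rho> (\<sigma> s)) \<otimes>\<^bsub>S\<^esub> \<rho> h" unfolding m_def using h s sc by simp
          then have "\<rho> m = \<one>\<^bsub>S\<^esub>" using rs[OF s] s unfolding s_def by simp
          then have mK: "m \<in> K" using Kd mc by simp
          have "f (s, m) = h" unfolding f_def m_def using h s sc by (simp add: m_assoc[symmetric])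
          moreover have "(s,m) \<in> carrier (S \<times>\<times> N)" using s mK unfolding N_def by simp
          ultimately show "h \<in> f ` carrier (S \<times>\<times> N)" by force
        qed
      qed
    qed
  qed
  then have "(S \<times>\<times> N) \<cong> H" by (rule is_isoI)
  then have "H \<cong> S \<times>\<times> N" using group.iso_sym[OF DirProd_group[OF gS gN]] by blast
  then show ?thesis unfolding has_direct_factor_iso_def using gN by blast
qed


lemma key_i:
  fixes Gs :: "nat \<Rightarrow> 'a monoid" and H :: "'b monoid" and n :: nat
  assumes gGs: "\<And>i. i < n \<Longrightarrow> group (Gs i)"
    and clG: "\<And>i. i < n \<Longrightarrow> centreless (Gs i)"
    and diG: "\<And>i. i < n \<Longrightarrow> directly_indecomposable (Gs i)"
    and gH: "group H"
    and nf: "\<And>i. i < n \<Longrightarrow> \<not> has_direct_factor_iso H (Gs i)"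
    and Gd: "G = product_group {..<n} Gs"
    and phi: "\<phi> \<in> iso (G \<times>\<times> H) (G \<times>\<times> H)"
    and i: "i < n"
  shows "\<forall>h \<in> carrier H. fst (\<phi> (\<one>\<^bsub>G\<^esub>, h)) i = \<one>\<^bsub>Gs i\<^esub>"
proof -
  define XX where "XX = G \<times>\<times> H"
  have gG: "group G" unfolding Gd using gGs by (intro product_group) simp
  have gX: "group XX" unfolding XX_def using gG gH by (rule DirProd_group)
  interpret XX: group XX by (rule gX)
  interpret G: group G by (rule gG)
  interpret H: group H by (rule gH)
  interpret Gi: group "Gs i" using gGs i by simp
  have phiX: "\<phi> \<in> iso XX XX" using phi XX_def by simp
  have phh: "\<phi> \<in> hom XX XX" using phiX by (simp add: iso_iff)
  have phinj: "inj_on \<phi> (carrier XX)" and phsurj: "\<phi> ` carrier XX = carrier XX" using phiX by (auto simp: iso_iff)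
  define \<psi> where "\<psi> = inv_into (carrier XX) \<phi>"
  have psX: "\<psi> \<in> iso XX XX" unfolding \<psi>_def using XX.iso_set_sym[OF phiX] .
  have psc: "\<psi> x \<in> carrier XX" if "x \<in> carrier XX" for x using psX that by (auto simp: iso_iff)
  have phps: "\<phi> (\<psi> x) = x" if "x \<in> carrier XX" for x
    unfolding \<psi>_def using phsurj that by (simp add: f_inv_into_f)
  have phc: "\<phi> x \<in> carrier XX" if "x \<in> carrier XX" for x using phh that by (simp add: hom_in_carrier)
  have phm: "\<phi> (x \<otimes>\<^bsub>XX\<^esub> y) = \<phi> x \<otimes>\<^bsub>XX\<^esub> \<phi> y" if "x \<in> carrier XX" "y \<in> carrier XX" for x y
    using phh that by (simp add: hom_def)
  have Xc: "carrier XX = carrier G \<times> carrier H" unfolding XX_def by simp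
  have Xm: "(g, h) \<otimes>\<^bsub>XX\<^esub> (g', h') = (g \<otimes>\<^bsub>G\<^esub> g', h \<otimes>\<^bsub>H\<^esub> h')" for g h g' h' unfolding XX_def by simp
  have X1: "\<one>\<^bsub>XX\<^esub> = (\<one>\<^bsub>G\<^esub>, \<one>\<^bsub>H\<^esub>)" unfolding XX_def by simp
  define p where "p = (\<lambda>x::(nat \<Rightarrow> 'a) \<times> 'b. fst x i)"
  have Gc: "carrier G = (\<Pi>\<^sub>E j\<in>{..<n}. carrier (Gs j))" unfolding Gd by simp
  have Gm: "g \<otimes>\<^bsub>G\<^esub> g' = (\<lambda>j\<in>{..<n}. g j \<otimes>\<^bsub>Gs j\<^esub> g' j)" for g g' unfolding Gd by simp
  have G1: "\<one>\<^bsub>G\<^esub> = (\<lambda>j\<in>{..<n}. \<one>\<^bsub>Gs j\<^esub>)" unfolding Gd by simp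
  have ph: "p \<in> hom XX (Gs i)"
  proof (rule homI)
    fix x assume "x \<in> carrier XX"
    then have "fst x \<in> carrier G" using Xc by (simp add: mem_Times_iff)
    then show "p x \<in> carrier (Gs i)" using i unfolding p_def Gc by (simp add: PiE_iff)
  next
    fix x y assume "x \<in> carrier XX" "y \<in> carrier XX"
    then show "p (x \<otimes>\<^bsub>XX\<^esub> y) = p x \<otimes>\<^bsub>Gs i\<^esub> p y"
      using i unfolding p_def XX_def by (simp add: mult_DirProd' Gm)
  qed
  have pc: "p x \<in> carrier (Gs i)" if "x \<in> carrier XX" for x using ph that by (simp add: hom_in_carrier)
  have pm: "p (x \<otimes>\<^bsub>XX\<^esub> y) = p x \<otimes>\<^bsub>Gs i\<^esub> p y" if "x \<in> carrier XX" "y \<in> carrier XX" for x y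
    using ph that by (simp add: hom_def)
  define a where "a = (\<lambda>u. \<phi> (u, \<one>\<^bsub>H\<^esub>))"
  define k where "k = (\<lambda>v. \<phi> (\<one>\<^bsub>G\<^esub>, v))"
  have ah: "a \<in> hom G XX"
  proof (rule homI)
    fix x assume "x \<in> carrier G" then show "a x \<in> carrier XX" unfolding a_def using phc Xc by simp
  next
    fix x y assume "x \<in> carrier G" "y \<in> carrier G"
    then show "a (x \<otimes>\<^bsub>G\<^esub> y) = a x \<otimes>\<^bsub>XX\<^esub> a y" unfolding a_def
      using phm[of "(x, \<one>\<^bsub>H\<^esub>)" "(y, \<one>\<^bsub>H\<^esub>)"] Xc Xm by simp
  qed
  have kh: "k \<in> hom H XX"
  proof (rule homI)
    fix x assume "x \<in> carrier H" then show "k x \<in> carrier XX" unfolding k_def using phc Xc by simp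
  next
    fix x y assume "x \<in> carrier H" "y \<in> carrier H"
    then show "k (x \<otimes>\<^bsub>H\<^esub> y) = k x \<otimes>\<^bsub>XX\<^esub> k y" unfolding k_def
      using phm[of "(\<one>\<^bsub>G\<^esub>, x)" "(\<one>\<^bsub>G\<^esub>, y)"] Xc Xm by simp
  qed
  have ac: "a u \<in> carrier XX" if "u \<in> carrier G" for u using ah that by (simp add: hom_in_carrier)
  have kc: "k v \<in> carrier XX" if "v \<in> carrier H" for v using kh that by (simp add: hom_in_carrier)
  have akc: "a u \<otimes>\<^bsub>XX\<^esub> k v = k v \<otimes>\<^bsub>XX\<^esub> a u" if "u \<in> carrier G" "v \<in> carrier H" for u v
  proof -
    have "a u \<otimes>\<^bsub>XX\<^esub> k v = \<phi> ((u, \<one>\<^bsub>H\<^esub>) \<otimes>\<^bsub>XX\<^esub> (\<one>\<^bsub>G\<^esub>, v))"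
      unfolding a_def k_def using that Xc by (simp add: phm)
    also have "\<dots> = \<phi> ((\<one>\<^bsub>G\<^esub>, v) \<otimes>\<^bsub>XX\<^esub> (u, \<one>\<^bsub>H\<^esub>))" using that Xm by simp
    also have "\<dots> = k v \<otimes>\<^bsub>XX\<^esub> a u" unfolding a_def k_def using that Xc by (simp add: phm)
    finally show ?thesis .
  qed
  have decomp: "x = a (fst (\<psi> x)) \<otimes>\<^bsub>XX\<^esub> k (snd (\<psi> x))" "fst (\<psi> x) \<in> carrier G" "snd (\<psi> x) \<in> carrier H"
    if "x \<in> carrier XX" for x
  proof -
    obtain u v where uv: "\<psi> x = (u, v)" by (cases "\<psi> x")
    have u: "u \<in> carrier G" and v: "v \<in> carrier H" using psc[OF that] uv Xc by auto
    have "x = \<phi> (\<psi> x)" using phps that by simp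
    also have "\<dots> = \<phi> ((u, \<one>\<^bsub>H\<^esub>) \<otimes>\<^bsub>XX\<^esub> (\<one>\<^bsub>G\<^esub>, v))" using uv u v Xm by simp
    also have "\<dots> = a u \<otimes>\<^bsub>XX\<^esub> k v" unfolding a_def k_def using u v Xc by (simp add: phm)
    finally show "x = a (fst (\<psi> x)) \<otimes>\<^bsub>XX\<^esub> k (snd (\<psi> x))" using uv by simp
    show "fst (\<psi> x) \<in> carrier G" "snd (\<psi> x) \<in> carrier H" using u v uv by auto
  qed
  define B where "B = (p \<circ> a) ` carrier G"
  define C where "C = (p \<circ> k) ` carrier H"
  have sB: "subgroup B (Gs i)" unfolding B_def
    by (rule group_hom.img_is_subgroup) (simp add: group_hom_def group_hom_axioms_def gG hom_compose[OF ah ph] Gi.group_axioms)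
  have sC: "subgroup C (Gs i)" unfolding C_def
    by (rule group_hom.img_is_subgroup) (simp add: group_hom_def group_hom_axioms_def gH hom_compose[OF kh ph] Gi.group_axioms)
  define \<iota> where "\<iota> = (\<lambda>g. (\<lambda>j\<in>{..<n}. if j = i then g else \<one>\<^bsub>Gs j\<^esub>, \<one>\<^bsub>H\<^esub>))"
  have \<iota>c: "\<iota> g \<in> carrier XX" if "g \<in> carrier (Gs i)" for g
  proof -
    have "(\<lambda>j\<in>{..<n}. if j = i then g else \<one>\<^bsub>Gs j\<^esub>) \<in> carrier G"
      unfolding Gc using that gGs by (auto simp: PiE_iff monoid.one_closed group.is_monoid)
    then show ?thesis unfolding \<iota>_def using Xc by (simp add: mem_Times_iff)
  qed
  have p\<iota>: "p (\<iota> g) = g" for g unfolding p_def \<iota>_def using i by simp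
  have gen: "\<exists>b\<in>B. \<exists>c\<in>C. g = b \<otimes>\<^bsub>Gs i\<^esub> c" if g: "g \<in> carrier (Gs i)" for g
  proof -
    note d = decomp[OF \<iota>c[OF g]]
    define u where "u = fst (\<psi> (\<iota> g))"
    define v where "v = snd (\<psi> (\<iota> g))"
    have u: "u \<in> carrier G" and v: "v \<in> carrier H" using d(2,3) unfolding u_def v_def by auto
    have "g = p (\<iota> g)" using p\<iota> by simp
    also have "\<dots> = p (a u \<otimes>\<^bsub>XX\<^esub> k v)" unfolding u_def v_def using d(1) by (rule arg_cong)
    also have "\<dots> = p (a u) \<otimes>\<^bsub>Gs i\<^esub> p (k v)" using pm[OF ac[OF u] kc[OF v]] .
    finally have e: "g = p (a u) \<otimes>\<^bsub>Gs i\<^esub> p (k v)" .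
    have "p (a u) \<in> B" unfolding B_def using u by simp
    moreover have "p (k v) \<in> C" unfolding C_def using v by simp
    ultimately show ?thesis using e by blast
  qed
  have comm: "b \<otimes>\<^bsub>Gs i\<^esub> c = c \<otimes>\<^bsub>Gs i\<^esub> b" if bB: "b \<in> B" and cC: "c \<in> C" for b c
  proof -
    obtain u where u: "u \<in> carrier G" "b = p (a u)" using bB unfolding B_def by auto
    obtain v where v: "v \<in> carrier H" "c = p (k v)" using cC unfolding C_def by auto
    have "b \<otimes>\<^bsub>Gs i\<^esub> c = p (a u \<otimes>\<^bsub>XX\<^esub> k v)" unfolding u(2) v(2) using pm[OF ac[OF u(1)] kc[OF v(1)]] by simp
    also have "\<dots> = p (k v \<otimes>\<^bsub>XX\<^esub> a u)" using akc[OF u(1) v(1)] by simp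
    also have "\<dots> = c \<otimes>\<^bsub>Gs i\<^esub> b" unfolding u(2) v(2) using pm[OF kc[OF v(1)] ac[OF u(1)]] by simp
    finally show ?thesis .
  qed
  have BC: "B = {\<one>\<^bsub>Gs i\<^esub>} \<or> C = {\<one>\<^bsub>Gs i\<^esub>}"
    using indec_split[OF gGs[OF i] clG[OF i] diG[OF i] sB sC gen comm] by blast
  have "C = {\<one>\<^bsub>Gs i\<^esub>}"
  proof (rule ccontr)
    assume nC: "C \<noteq> {\<one>\<^bsub>Gs i\<^esub>}"
    then have B1: "B = {\<one>\<^bsub>Gs i\<^esub>}" using BC by blast
    define \<rho> where "\<rho> = p \<circ> k"
    define \<sigma> where "\<sigma> = (\<lambda>g. snd (\<psi> (\<iota> g)))"
    have rh: "\<rho> \<in> hom H (Gs i)" unfolding \<rho>_def using hom_compose[OF kh ph] .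
    have \<iota>m: "\<iota> (g \<otimes>\<^bsub>Gs i\<^esub> g') = \<iota> g \<otimes>\<^bsub>XX\<^esub> \<iota> g'" if "g \<in> carrier (Gs i)" "g' \<in> carrier (Gs i)" for g g'
    proof -
      have "(\<lambda>j\<in>{..<n}. if j = i then g \<otimes>\<^bsub>Gs i\<^esub> g' else \<one>\<^bsub>Gs j\<^esub>)
          = (\<lambda>j\<in>{..<n}. (if j = i then g else \<one>\<^bsub>Gs j\<^esub>) \<otimes>\<^bsub>Gs j\<^esub> (if j = i then g' else \<one>\<^bsub>Gs j\<^esub>))"
      proof (rule restrict_ext)
        fix j assume j: "j \<in> {..<n}"
        show "(if j = i then g \<otimes>\<^bsub>Gs i\<^esub> g' else \<one>\<^bsub>Gs j\<^esub>)
          = (if j = i then g else \<one>\<^bsub>Gs j\<^esub>) \<otimes>\<^bsub>Gs j\<^esub> (if j = i then g' else \<one>\<^bsub>Gs j\<^esub>)"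
        proof (cases "j = i")
          case True then show ?thesis by simp
        next
          case False
          interpret Gj: group "Gs j" using gGs j by simp
          show ?thesis using False by simp
        qed
      qed
      then show ?thesis unfolding \<iota>_def Xm Gm by (simp cong: restrict_cong)
    qed
    have psm: "\<psi> (x \<otimes>\<^bsub>XX\<^esub> y) = \<psi> x \<otimes>\<^bsub>XX\<^esub> \<psi> y" if "x \<in> carrier XX" "y \<in> carrier XX" for x y
      using psX that by (simp add: iso_iff hom_def)
    have sh: "\<sigma> \<in> hom (Gs i) H"
    proof (rule homI)
      fix g assume "g \<in> carrier (Gs i)" then show "\<sigma> g \<in> carrier H" unfolding \<sigma>_def using decomp \<iota>c by blast
    next
      fix g g' assume gg: "g \<in> carrier (Gs i)" "g' \<in> carrier (Gs i)"
      have "\<psi> (\<iota> (g \<otimes>\<^bsub>Gs i\<^esub> g')) = \<psi> (\<iota> g) \<otimes>\<^bsub>XX\<^esub> \<psi> (\<iota> g')" using gg \<iota>m \<iota>c psm by simp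
      then show "\<sigma> (g \<otimes>\<^bsub>Gs i\<^esub> g') = \<sigma> g \<otimes>\<^bsub>H\<^esub> \<sigma> g'" unfolding \<sigma>_def XX_def by (simp add: mult_DirProd')
    qed
    have pa1: "p (a u) = \<one>\<^bsub>Gs i\<^esub>" if "u \<in> carrier G" for u using B1 that unfolding B_def by auto
    have rs: "\<rho> (\<sigma> s) = s" if s: "s \<in> carrier (Gs i)" for s
    proof -
      note d = decomp[OF \<iota>c[OF s]]
      define u where "u = fst (\<psi> (\<iota> s))"
      define v where "v = snd (\<psi> (\<iota> s))"
      have u: "u \<in> carrier G" and v: "v \<in> carrier H" using d(2,3) unfolding u_def v_def by auto
      have "s = p (\<iota> s)" using p\<iota> by simp
      also have "\<dots> = p (a u \<otimes>\<^bsub>XX\<^esub> k v)" unfolding u_def v_def using d(1) by (rule arg_cong)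
      also have "\<dots> = p (a u) \<otimes>\<^bsub>Gs i\<^esub> p (k v)" using pm[OF ac[OF u] kc[OF v]] .
      also have "\<dots> = p (k v)" using pa1[OF u] pc[OF kc[OF v]] by simp
      finally show ?thesis unfolding \<rho>_def \<sigma>_def v_def by simp
    qed
    have kinj: "inj_on k (carrier H)"
    proof (rule inj_onI)
      fix x y assume "x \<in> carrier H" "y \<in> carrier H" "k x = k y"
      then show "x = y" using phinj unfolding k_def inj_on_def Xc by auto
    qed
    have cm: "\<sigma> s \<otimes>\<^bsub>H\<^esub> m = m \<otimes>\<^bsub>H\<^esub> \<sigma> s" if s: "s \<in> carrier (Gs i)" and m: "m \<in> carrier H" and rm: "\<rho> m = \<one>\<^bsub>Gs i\<^esub>" for s m
    proof -
      note d = decomp[OF \<iota>c[OF s]]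
      define u where "u = fst (\<psi> (\<iota> s))"
      define v where "v = snd (\<psi> (\<iota> s))"
      have u: "u \<in> carrier G" and v: "v \<in> carrier H" using d(2,3) unfolding u_def v_def by auto
      have e: "\<iota> s = a u \<otimes>\<^bsub>XX\<^esub> k v" unfolding u_def v_def by (rule d(1))
      have km: "k m \<in> carrier XX" using kc m .
      obtain w z where wz: "k m = (w, z)" by (cases "k m")
      have w: "w \<in> carrier G" and z: "z \<in> carrier H" using km wz Xc by auto
      have wi: "w i = \<one>\<^bsub>Gs i\<^esub>" using rm wz unfolding \<rho>_def p_def by simp
      have ek: "\<iota> s \<otimes>\<^bsub>XX\<^esub> k m = k m \<otimes>\<^bsub>XX\<^esub> \<iota> s"
      proof -
        have "(\<lambda>j\<in>{..<n}. (if j = i then s else \<one>\<^bsub>Gs j\<^esub>) \<otimes>\<^bsub>Gs j\<^esub> w j)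
            = (\<lambda>j\<in>{..<n}. w j \<otimes>\<^bsub>Gs j\<^esub> (if j = i then s else \<one>\<^bsub>Gs j\<^esub>))"
        proof (rule restrict_ext)
          fix j assume j: "j \<in> {..<n}"
          interpret Gj: group "Gs j" using gGs j by simp
          have wj: "w j \<in> carrier (Gs j)" using w j Gc by auto
          show "(if j = i then s else \<one>\<^bsub>Gs j\<^esub>) \<otimes>\<^bsub>Gs j\<^esub> w j = w j \<otimes>\<^bsub>Gs j\<^esub> (if j = i then s else \<one>\<^bsub>Gs j\<^esub>)"
            using wj wi s by (cases "j = i") auto
        qed
        moreover have "\<one>\<^bsub>H\<^esub> \<otimes>\<^bsub>H\<^esub> z = z \<otimes>\<^bsub>H\<^esub> \<one>\<^bsub>H\<^esub>" using z by simp
        ultimately show ?thesis unfolding wz \<iota>_def Xm Gm by (simp cong: restrict_cong)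
      qed
      have ak: "a u \<otimes>\<^bsub>XX\<^esub> k m = k m \<otimes>\<^bsub>XX\<^esub> a u" using akc u m by simp
      have auc: "a u \<in> carrier XX" using ac[OF u] .
      have kvc: "k v \<in> carrier XX" using kc[OF v] .
      have isc: "\<iota> s \<in> carrier XX" using \<iota>c[OF s] .
      have kv: "k v = inv\<^bsub>XX\<^esub> (a u) \<otimes>\<^bsub>XX\<^esub> \<iota> s"
      proof -
        have "inv\<^bsub>XX\<^esub> (a u) \<otimes>\<^bsub>XX\<^esub> \<iota> s = inv\<^bsub>XX\<^esub> (a u) \<otimes>\<^bsub>XX\<^esub> (a u \<otimes>\<^bsub>XX\<^esub> k v)" using e by simp
        also have "\<dots> = k v" using auc kvc by (simp add: XX.m_assoc[symmetric])
        finally show ?thesis by simp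
      qed
      have aik: "inv\<^bsub>XX\<^esub> (a u) \<otimes>\<^bsub>XX\<^esub> k m = k m \<otimes>\<^bsub>XX\<^esub> inv\<^bsub>XX\<^esub> (a u)"
      proof -
        have "inv\<^bsub>XX\<^esub> (a u) \<otimes>\<^bsub>XX\<^esub> k m = inv\<^bsub>XX\<^esub> (a u) \<otimes>\<^bsub>XX\<^esub> (k m \<otimes>\<^bsub>XX\<^esub> a u) \<otimes>\<^bsub>XX\<^esub> inv\<^bsub>XX\<^esub> (a u)"
          using auc km by (simp add: XX.m_assoc)
        also have "\<dots> = inv\<^bsub>XX\<^esub> (a u) \<otimes>\<^bsub>XX\<^esub> (a u \<otimes>\<^bsub>XX\<^esub> k m) \<otimes>\<^bsub>XX\<^esub> inv\<^bsub>XX\<^esub> (a u)"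
          using ak by simp
        also have "\<dots> = k m \<otimes>\<^bsub>XX\<^esub> inv\<^bsub>XX\<^esub> (a u)" using auc km by (simp add: XX.m_assoc[symmetric])
        finally show ?thesis .
      qed
      have "k (v \<otimes>\<^bsub>H\<^esub> m) = k v \<otimes>\<^bsub>XX\<^esub> k m" using kh v m by (simp add: hom_def)
      also have "\<dots> = inv\<^bsub>XX\<^esub> (a u) \<otimes>\<^bsub>XX\<^esub> (\<iota> s \<otimes>\<^bsub>XX\<^esub> k m)"
        unfolding kv using auc isc km by (simp add: XX.m_assoc)
      also have "\<dots> = inv\<^bsub>XX\<^esub> (a u) \<otimes>\<^bsub>XX\<^esub> (k m \<otimes>\<^bsub>XX\<^esub> \<iota> s)" unfolding ek ..
      also have "\<dots> = (inv\<^bsub>XX\<^esub> (a u) \<otimes>\<^bsub>XX\<^esub> k m) \<otimes>\<^bsub>XX\<^esub> \<iota> s"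
        using auc isc km by (simp add: XX.m_assoc)
      also have "\<dots> = (k m \<otimes>\<^bsub>XX\<^esub> inv\<^bsub>XX\<^esub> (a u)) \<otimes>\<^bsub>XX\<^esub> \<iota> s" unfolding aik ..
      also have "\<dots> = k m \<otimes>\<^bsub>XX\<^esub> k v"
        unfolding kv using auc isc km by (simp add: XX.m_assoc)
      also have "\<dots> = k (m \<otimes>\<^bsub>H\<^esub> v)" using kh v m by (simp add: hom_def)
      finally have "v \<otimes>\<^bsub>H\<^esub> m = m \<otimes>\<^bsub>H\<^esub> v" using kinj v m by (simp add: inj_on_def)
      then show ?thesis unfolding \<sigma>_def v_def .
    qed
    have "has_direct_factor_iso H (Gs i)"
      using split_factor[OF gH gGs[OF i] rh sh rs cm] by blast
    then show False using nf[OF i] by blast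
  qed
  then show ?thesis unfolding C_def k_def p_def by auto
qed


lemma key_all:
  fixes Gs :: "nat \<Rightarrow> 'a monoid" and H :: "'b monoid" and n :: nat
  assumes gGs: "\<And>i. i < n \<Longrightarrow> group (Gs i)"
    and clG: "\<And>i. i < n \<Longrightarrow> centreless (Gs i)"
    and diG: "\<And>i. i < n \<Longrightarrow> directly_indecomposable (Gs i)"
    and gH: "group H"
    and nf: "\<And>i. i < n \<Longrightarrow> \<not> has_direct_factor_iso H (Gs i)"
    and Gd: "G = product_group {..<n} Gs"
    and phi: "\<phi> \<in> iso (G \<times>\<times> H) (G \<times>\<times> H)"
    and h: "h \<in> carrier H"
  shows "fst (\<phi> (\<one>\<^bsub>G\<^esub>, h)) = \<one>\<^bsub>G\<^esub>"
proof -
  have gG: "group G" unfolding Gd using gGs by (intro product_group) simp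
  have "(\<one>\<^bsub>G\<^esub>, h) \<in> carrier (G \<times>\<times> H)" using h monoid.one_closed[OF group.is_monoid[OF gG]] by simp
  then have "\<phi> (\<one>\<^bsub>G\<^esub>, h) \<in> carrier (G \<times>\<times> H)" by (rule hom_in_carrier[OF iso_imp_homomorphism[OF phi]])
  then have "fst (\<phi> (\<one>\<^bsub>G\<^esub>, h)) \<in> carrier G" by (simp add: mem_Times_iff)
  moreover have Gc: "carrier G = (\<Pi>\<^sub>E j\<in>{..<n}. carrier (Gs j))" using Gd by simp
  ultimately have c: "fst (\<phi> (\<one>\<^bsub>G\<^esub>, h)) \<in> (\<Pi>\<^sub>E j\<in>{..<n}. carrier (Gs j))" by simp
  have G1: "\<one>\<^bsub>G\<^esub> = (\<lambda>j\<in>{..<n}. \<one>\<^bsub>Gs j\<^esub>)" using Gd by simp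
  show ?thesis
  proof (rule ext)
    fix j
    show "fst (\<phi> (\<one>\<^bsub>G\<^esub>, h)) j = \<one>\<^bsub>G\<^esub> j"
    proof (cases "j < n")
      case True
      then show ?thesis using key_i[OF gGs clG diG gH nf Gd phi True] h by (simp add: G1)
    next
      case False
      have "fst (\<phi> (\<one>\<^bsub>G\<^esub>, h)) j = undefined" using PiE_arb[OF c] False by simp
      then show ?thesis using False by (simp add: G1)
    qed
  qed
qed


theorem mainTheorem17:
  fixes Gs :: "nat \<Rightarrow> 'a monoid" and H :: "'b monoid" and n :: nat
  assumes "\<And>i. i < n \<Longrightarrow> group (Gs i)"
    and "\<And>i. i < n \<Longrightarrow> nontrivial_group (Gs i)"
    and "\<And>i. i < n \<Longrightarrow> centreless (Gs i)"
    and "\<And>i. i < n \<Longrightarrow> directly_indecomposable (Gs i)"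
    and "group H" and "nontrivial_group H"
    and "\<And>i. i < n \<Longrightarrow> \<not> has_direct_factor_iso H (Gs i)"
  defines "G \<equiv> product_group {..<n} Gs"
  shows "(\<forall>\<phi>. \<phi> \<in> iso (G \<times>\<times> H) (G \<times>\<times> H) \<longleftrightarrow>
            (\<exists>\<alpha> \<delta> \<gamma>. \<alpha> \<in> iso G G \<and> \<delta> \<in> iso H H \<and> \<gamma> \<in> hom G H \<and>
               \<gamma> ` carrier G \<subseteq> center H \<and>
               (\<forall>g \<in> carrier G. \<forall>h \<in> carrier H. \<phi> (g, h) = (\<alpha> g, \<gamma> g \<otimes>\<^bsub>H\<^esub> \<delta> h))))
         \<and> (\<forall>\<phi> \<in> iso (G \<times>\<times> H) (G \<times>\<times> H).
               \<phi> ` ({\<one>\<^bsub>G\<^esub>} \<times> carrier H) = {\<one>\<^bsub>G\<^esub>} \<times> carrier H)"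
proof -
  note gGs = assms(1) and clG = assms(3) and diG = assms(4) and gH = assms(5) and nf = assms(7)
  have Gd: "G = product_group {..<n} Gs" unfolding G_def ..
  have gG: "group G" unfolding Gd using gGs by (intro product_group) simp
  define XX where "XX = G \<times>\<times> H"
  have gX: "group XX" unfolding XX_def using gG gH by (rule DirProd_group)
  interpret XX: group XX by (rule gX)
  interpret G: group G by (rule gG)
  interpret H: group H by (rule gH)
  have Xc: "carrier XX = carrier G \<times> carrier H" unfolding XX_def by simp
  have Xm: "(g, h) \<otimes>\<^bsub>XX\<^esub> (g', h') = (g \<otimes>\<^bsub>G\<^esub> g', h \<otimes>\<^bsub>H\<^esub> h')" for g h g' h' unfolding XX_def by simp
  have key: "fst (\<phi> (\<one>\<^bsub>G\<^esub>, h)) = \<one>\<^bsub>G\<^esub>" if "\<phi> \<in> iso XX XX" "h \<in> carrier H" for \<phi> h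
    using key_all[OF gGs clG diG gH nf Gd _ that(2)] that(1) unfolding XX_def by blast
  have phc: "\<phi> x \<in> carrier XX" if "\<phi> \<in> iso XX XX" "x \<in> carrier XX" for \<phi> x
    by (rule hom_in_carrier[OF iso_imp_homomorphism[OF that(1)] that(2)])
  have phm: "\<phi> (x \<otimes>\<^bsub>XX\<^esub> y) = \<phi> x \<otimes>\<^bsub>XX\<^esub> \<phi> y" if "\<phi> \<in> iso XX XX" "x \<in> carrier XX" "y \<in> carrier XX" for \<phi> x y
    using iso_imp_homomorphism[OF that(1)] that(2,3) by (simp add: hom_def)
  have key2: "\<phi> (\<one>\<^bsub>G\<^esub>, h) = (\<one>\<^bsub>G\<^esub>, snd (\<phi> (\<one>\<^bsub>G\<^esub>, h)))" if "\<phi> \<in> iso XX XX" "h \<in> carrier H" for \<phi> h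
    using key[OF that] by (metis prod.collapse)
  have inv_ok: "inv_into (carrier XX) \<phi> \<in> iso XX XX" and
       inv_c: "\<And>x. x \<in> carrier XX \<Longrightarrow> \<phi> (inv_into (carrier XX) \<phi> x) = x"
    if "\<phi> \<in> iso XX XX" for \<phi>
  proof -
    show "inv_into (carrier XX) \<phi> \<in> iso XX XX" using XX.iso_set_sym[OF that] .
    show "\<And>x. x \<in> carrier XX \<Longrightarrow> \<phi> (inv_into (carrier XX) \<phi> x) = x"
      using that by (simp add: iso_iff f_inv_into_f)
  qed
  have fwd: "\<exists>\<alpha> \<delta> \<gamma>. \<alpha> \<in> iso G G \<and> \<delta> \<in> iso H H \<and> \<gamma> \<in> hom G H \<and>
               \<gamma> ` carrier G \<subseteq> center H \<and>
               (\<forall>g \<in> carrier G. \<forall>h \<in> carrier H. \<phi> (g, h) = (\<alpha> g, \<gamma> g \<otimes>\<^bsub>H\<^esub> \<delta> h))"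
    if phi: "\<phi> \<in> iso XX XX" for \<phi>
  proof -
    define \<psi> where "\<psi> = inv_into (carrier XX) \<phi>"
    have psX: "\<psi> \<in> iso XX XX" unfolding \<psi>_def by (rule inv_ok[OF phi])
    have phps: "\<phi> (\<psi> x) = x" if "x \<in> carrier XX" for x unfolding \<psi>_def by (rule inv_c[OF phi that])
    have phinj: "inj_on \<phi> (carrier XX)" using phi by (simp add: iso_iff)
    define \<alpha> where "\<alpha> = (\<lambda>g. fst (\<phi> (g, \<one>\<^bsub>H\<^esub>)))"
    define \<gamma> where "\<gamma> = (\<lambda>g. snd (\<phi> (g, \<one>\<^bsub>H\<^esub>)))"
    define \<delta> where "\<delta> = (\<lambda>h. snd (\<phi> (\<one>\<^bsub>G\<^esub>, h)))"
    define a where "a = (\<lambda>u. \<phi> (u, \<one>\<^bsub>H\<^esub>))"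
    define k where "k = (\<lambda>v. \<phi> (\<one>\<^bsub>G\<^esub>, v))"
    have ah: "a \<in> hom G XX"
    proof (rule homI)
      fix x assume "x \<in> carrier G" then show "a x \<in> carrier XX" unfolding a_def using phc[OF phi] Xc by simp
    next
      fix x y assume "x \<in> carrier G" "y \<in> carrier G"
      then show "a (x \<otimes>\<^bsub>G\<^esub> y) = a x \<otimes>\<^bsub>XX\<^esub> a y" unfolding a_def
        using phm[OF phi, of "(x, \<one>\<^bsub>H\<^esub>)" "(y, \<one>\<^bsub>H\<^esub>)"] Xc Xm by simp
    qed
    have kh: "k \<in> hom H XX"
    proof (rule homI)
      fix x assume "x \<in> carrier H" then show "k x \<in> carrier XX" unfolding k_def using phc[OF phi] Xc by simp
    next
      fix x y assume "x \<in> carrier H" "y \<in> carrier H"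
      then show "k (x \<otimes>\<^bsub>H\<^esub> y) = k x \<otimes>\<^bsub>XX\<^esub> k y" unfolding k_def
        using phm[OF phi, of "(\<one>\<^bsub>G\<^esub>, x)" "(\<one>\<^bsub>G\<^esub>, y)"] Xc Xm by simp
    qed
    have aeq: "a = (\<lambda>x. (\<alpha> x, \<gamma> x))" unfolding a_def \<alpha>_def \<gamma>_def by simp
    have ah': "(\<lambda>x. (\<alpha> x, \<gamma> x)) \<in> hom G (G \<times>\<times> H)" using ah unfolding aeq XX_def .
    have alh: "\<alpha> \<in> hom G G" and gah: "\<gamma> \<in> hom G H" using ah' hom_paired by blast+
    have dh: "\<delta> \<in> hom H H"
    proof -
      have "snd \<circ> k \<in> hom H H" using kh hom_pairwise unfolding XX_def by blast
      moreover have "snd \<circ> k = \<delta>" unfolding k_def \<delta>_def by auto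
      ultimately show ?thesis by simp
    qed
    have kd: "k h = (\<one>\<^bsub>G\<^esub>, \<delta> h)" if "h \<in> carrier H" for h
      unfolding k_def \<delta>_def using key2[OF phi that] .
    have ad: "a g = (\<alpha> g, \<gamma> g)" for g unfolding aeq by simp
    have alc: "\<alpha> g \<in> carrier G" and gac: "\<gamma> g \<in> carrier H" if "g \<in> carrier G" for g
      using alh gah that by (simp_all add: hom_in_carrier)
    have dc: "\<delta> h \<in> carrier H" if "h \<in> carrier H" for h using dh that by (simp add: hom_in_carrier)
    have form: "\<phi> (g, h) = (\<alpha> g, \<gamma> g \<otimes>\<^bsub>H\<^esub> \<delta> h)" if g: "g \<in> carrier G" and h: "h \<in> carrier H" for g h
    proof -
      have "\<phi> (g, h) = \<phi> ((g, \<one>\<^bsub>H\<^esub>) \<otimes>\<^bsub>XX\<^esub> (\<one>\<^bsub>G\<^esub>, h))" using g h Xm by simp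
      also have "\<dots> = a g \<otimes>\<^bsub>XX\<^esub> k h" unfolding a_def k_def using g h Xc by (simp add: phm[OF phi])
      also have "\<dots> = (\<alpha> g, \<gamma> g \<otimes>\<^bsub>H\<^esub> \<delta> h)" unfolding ad kd[OF h] Xm using alc[OF g] by simp
      finally show ?thesis .
    qed
    have phpsi_one: "fst (\<psi> (\<one>\<^bsub>G\<^esub>, h)) = \<one>\<^bsub>G\<^esub>" if "h \<in> carrier H" for h using key[OF psX that] .
    have dsurj: "\<exists>h0 \<in> carrier H. \<delta> h0 = h" if h: "h \<in> carrier H" for h
    proof -
      have x: "(\<one>\<^bsub>G\<^esub>, h) \<in> carrier XX" using h Xc by simp
      obtain u v where uv: "\<psi> (\<one>\<^bsub>G\<^esub>, h) = (u, v)" by (cases "\<psi> (\<one>\<^bsub>G\<^esub>, h)")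
      have "(u, v) \<in> carrier XX" using phc[OF psX x] uv by simp
      then have v: "v \<in> carrier H" using Xc by simp
      have u: "u = \<one>\<^bsub>G\<^esub>" using phpsi_one[OF h] uv by simp
      have "(\<one>\<^bsub>G\<^esub>, h) = \<phi> (\<one>\<^bsub>G\<^esub>, v)" using phps[OF x] uv u by simp
      also have "\<dots> = (\<one>\<^bsub>G\<^esub>, \<delta> v)" using kd[OF v] unfolding k_def .
      finally show ?thesis using v by auto
    qed
    have dinj: "inj_on \<delta> (carrier H)"
    proof (rule inj_onI)
      fix x y assume x: "x \<in> carrier H" and y: "y \<in> carrier H" and e: "\<delta> x = \<delta> y"
      have "\<phi> (\<one>\<^bsub>G\<^esub>, x) = \<phi> (\<one>\<^bsub>G\<^esub>, y)" using kd[OF x] kd[OF y] e unfolding k_def by simp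
      moreover have "(\<one>\<^bsub>G\<^esub>, x) \<in> carrier XX" "(\<one>\<^bsub>G\<^esub>, y) \<in> carrier XX" using x y Xc by auto
      ultimately have "(\<one>\<^bsub>G\<^esub>, x) = (\<one>\<^bsub>G\<^esub>, y)" by (rule inj_onD[OF phinj])
      then show "x = y" by simp
    qed
    have diso: "\<delta> \<in> iso H H"
    proof -
      have "\<delta> ` carrier H = carrier H" using dsurj dc by blast
      then show ?thesis using dh dinj by (simp add: iso_iff)
    qed
    have ainj: "inj_on \<alpha> (carrier G)"
    proof (rule inj_onI)
      fix x y assume x: "x \<in> carrier G" and y: "y \<in> carrier G" and e: "\<alpha> x = \<alpha> y"
      have t: "inv\<^bsub>H\<^esub> (\<gamma> y) \<otimes>\<^bsub>H\<^esub> \<gamma> x \<in> carrier H" using gac x y by simp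
      obtain h0 where h0: "h0 \<in> carrier H" "\<delta> h0 = inv\<^bsub>H\<^esub> (\<gamma> y) \<otimes>\<^bsub>H\<^esub> \<gamma> x" using dsurj[OF t] by blast
      have "\<phi> (y, h0) = (\<alpha> y, \<gamma> y \<otimes>\<^bsub>H\<^esub> (inv\<^bsub>H\<^esub> (\<gamma> y) \<otimes>\<^bsub>H\<^esub> \<gamma> x))" using form[OF y h0(1)] h0(2) by simp
      also have "\<dots> = (\<alpha> x, \<gamma> x)" using e gac[OF x] gac[OF y] by (simp add: H.m_assoc[symmetric])
      also have "\<dots> = \<phi> (x, \<one>\<^bsub>H\<^esub>)" using ad[of x] unfolding a_def by simp
      finally have "\<phi> (y, h0) = \<phi> (x, \<one>\<^bsub>H\<^esub>)" .
      moreover have "(y, h0) \<in> carrier XX" "(x, \<one>\<^bsub>H\<^esub>) \<in> carrier XX" using x y h0(1) Xc by auto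
      ultimately have "(y, h0) = (x, \<one>\<^bsub>H\<^esub>)" by (rule inj_onD[OF phinj])
      then show "x = y" by simp
    qed
    have asurj: "\<alpha> ` carrier G = carrier G"
    proof
      show "\<alpha> ` carrier G \<subseteq> carrier G" using alc by blast
      show "carrier G \<subseteq> \<alpha> ` carrier G"
      proof
        fix g assume g: "g \<in> carrier G"
        have x: "(g, \<one>\<^bsub>H\<^esub>) \<in> carrier XX" using g Xc by simp
        obtain u v where uv: "\<psi> (g, \<one>\<^bsub>H\<^esub>) = (u, v)" by (cases "\<psi> (g, \<one>\<^bsub>H\<^esub>)")
        have "(u, v) \<in> carrier XX" using phc[OF psX x] uv by simp
        then have u: "u \<in> carrier G" and v: "v \<in> carrier H" using Xc by auto
        have "(g, \<one>\<^bsub>H\<^esub>) = \<phi> (u, v)" using phps[OF x] uv by simp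
        also have "\<dots> = (\<alpha> u, \<gamma> u \<otimes>\<^bsub>H\<^esub> \<delta> v)" using form[OF u v] .
        finally show "g \<in> \<alpha> ` carrier G" using u by auto
      qed
    qed
    have aiso: "\<alpha> \<in> iso G G" using alh ainj asurj by (simp add: iso_iff)
    have cent: "\<gamma> ` carrier G \<subseteq> center H"
    proof
      fix z assume "z \<in> \<gamma> ` carrier G"
      then obtain g where g: "g \<in> carrier G" and z: "z = \<gamma> g" by blast
      show "z \<in> center H" unfolding center_def
      proof (safe)
        show "z \<in> carrier H" using gac[OF g] z by simp
        fix h' assume h': "h' \<in> carrier H"
        obtain h where h: "h \<in> carrier H" "\<delta> h = h'" using dsurj[OF h'] by blast
        have "\<phi> ((g, \<one>\<^bsub>H\<^esub>) \<otimes>\<^bsub>XX\<^esub> (\<one>\<^bsub>G\<^esub>, h)) = \<phi> ((\<one>\<^bsub>G\<^esub>, h) \<otimes>\<^bsub>XX\<^esub> (g, \<one>\<^bsub>H\<^esub>))"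
          using g h(1) Xm by simp
        then have "a g \<otimes>\<^bsub>XX\<^esub> k h = k h \<otimes>\<^bsub>XX\<^esub> a g"
          unfolding a_def k_def using g h(1) Xc by (simp add: phm[OF phi])
        then have "(\<alpha> g, \<gamma> g \<otimes>\<^bsub>H\<^esub> \<delta> h) = (\<alpha> g, \<delta> h \<otimes>\<^bsub>H\<^esub> \<gamma> g)"
          unfolding ad kd[OF h(1)] Xm using alc[OF g] by simp
        then show "z \<otimes>\<^bsub>H\<^esub> h' = h' \<otimes>\<^bsub>H\<^esub> z" using z h(2) by simp
      qed
    qed
    show ?thesis using aiso diso gah cent form by blast
  qed
  have bwd: "\<phi> \<in> iso XX XX" if "\<alpha> \<in> iso G G" "\<delta> \<in> iso H H" "\<gamma> \<in> hom G H" "\<gamma> ` carrier G \<subseteq> center H"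
    and form: "\<forall>g \<in> carrier G. \<forall>h \<in> carrier H. \<phi> (g, h) = (\<alpha> g, \<gamma> g \<otimes>\<^bsub>H\<^esub> \<delta> h)" for \<phi> \<alpha> \<delta> \<gamma>
  proof -
    have alh: "\<alpha> \<in> hom G G" and ainj: "inj_on \<alpha> (carrier G)" and asurj: "\<alpha> ` carrier G = carrier G"
      using that(1) by (auto simp: iso_iff)
    have dh: "\<delta> \<in> hom H H" and dinj: "inj_on \<delta> (carrier H)" and dsurj: "\<delta> ` carrier H = carrier H"
      using that(2) by (auto simp: iso_iff)
    have gah: "\<gamma> \<in> hom G H" by (rule that(3))
    have alc: "\<alpha> g \<in> carrier G" and gac: "\<gamma> g \<in> carrier H" if "g \<in> carrier G" for g
      using alh gah that by (simp_all add: hom_in_carrier)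
    have dc: "\<delta> h \<in> carrier H" if "h \<in> carrier H" for h using dh that by (simp add: hom_in_carrier)
    have cz: "\<gamma> g \<otimes>\<^bsub>H\<^esub> x = x \<otimes>\<^bsub>H\<^esub> \<gamma> g" if "g \<in> carrier G" "x \<in> carrier H" for g x
      using that(1,2) \<open>\<gamma> ` carrier G \<subseteq> center H\<close> unfolding center_def by blast
    have F: "\<phi> x = (\<alpha> (fst x), \<gamma> (fst x) \<otimes>\<^bsub>H\<^esub> \<delta> (snd x))" if "x \<in> carrier XX" for x
    proof -
      obtain g h where xg: "x = (g, h)" by (cases x)
      have "g \<in> carrier G" "h \<in> carrier H" using that Xc xg by auto
      then show ?thesis using form xg by simp
    qed
    show ?thesis
    proof (rule isoI)
      show "\<phi> \<in> hom XX XX"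
      proof (rule homI)
        fix x assume x: "x \<in> carrier XX"
        have fx: "fst x \<in> carrier G" "snd x \<in> carrier H" using x unfolding Xc mem_Times_iff by blast+
        have "(\<alpha> (fst x), \<gamma> (fst x) \<otimes>\<^bsub>H\<^esub> \<delta> (snd x)) \<in> carrier G \<times> carrier H"
          using alc[OF fx(1)] gac[OF fx(1)] dc[OF fx(2)] by (intro SigmaI H.m_closed)
        then show "\<phi> x \<in> carrier XX" using F[OF x] Xc by simp
      next
        fix x y assume x: "x \<in> carrier XX" and y: "y \<in> carrier XX"
        obtain g h where xg: "x = (g, h)" and g: "g \<in> carrier G" and h: "h \<in> carrier H" using x unfolding Xc by blast
        obtain g' h' where yg: "y = (g', h')" and g': "g' \<in> carrier G" and h': "h' \<in> carrier H" using y unfolding Xc by blast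
        have xy: "x \<otimes>\<^bsub>XX\<^esub> y = (g \<otimes>\<^bsub>G\<^esub> g', h \<otimes>\<^bsub>H\<^esub> h')" unfolding xg yg Xm ..
        have c2: "(\<gamma> g \<otimes>\<^bsub>H\<^esub> \<gamma> g') \<otimes>\<^bsub>H\<^esub> (\<delta> h \<otimes>\<^bsub>H\<^esub> \<delta> h') = (\<gamma> g \<otimes>\<^bsub>H\<^esub> \<delta> h) \<otimes>\<^bsub>H\<^esub> (\<gamma> g' \<otimes>\<^bsub>H\<^esub> \<delta> h')"
        proof -
          have "(\<gamma> g \<otimes>\<^bsub>H\<^esub> \<gamma> g') \<otimes>\<^bsub>H\<^esub> (\<delta> h \<otimes>\<^bsub>H\<^esub> \<delta> h') = \<gamma> g \<otimes>\<^bsub>H\<^esub> ((\<gamma> g' \<otimes>\<^bsub>H\<^esub> \<delta> h) \<otimes>\<^bsub>H\<^esub> \<delta> h')"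
            using gac[OF g] gac[OF g'] dc[OF h] dc[OF h'] by (simp add: H.m_assoc)
          also have "\<dots> = \<gamma> g \<otimes>\<^bsub>H\<^esub> ((\<delta> h \<otimes>\<^bsub>H\<^esub> \<gamma> g') \<otimes>\<^bsub>H\<^esub> \<delta> h')" using cz[OF g' dc[OF h]] by simp
          also have "\<dots> = (\<gamma> g \<otimes>\<^bsub>H\<^esub> \<delta> h) \<otimes>\<^bsub>H\<^esub> (\<gamma> g' \<otimes>\<^bsub>H\<^esub> \<delta> h')"
            using gac[OF g] gac[OF g'] dc[OF h] dc[OF h'] by (simp add: H.m_assoc)
          finally show ?thesis .
        qed
        have ggm: "g \<otimes>\<^bsub>G\<^esub> g' \<in> carrier G" "h \<otimes>\<^bsub>H\<^esub> h' \<in> carrier H" using g g' h h' by simp_all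
        have "\<phi> (x \<otimes>\<^bsub>XX\<^esub> y) = (\<alpha> (g \<otimes>\<^bsub>G\<^esub> g'), \<gamma> (g \<otimes>\<^bsub>G\<^esub> g') \<otimes>\<^bsub>H\<^esub> \<delta> (h \<otimes>\<^bsub>H\<^esub> h'))"
          unfolding xy using form ggm by blast
        also have "\<dots> = (\<alpha> g \<otimes>\<^bsub>G\<^esub> \<alpha> g', (\<gamma> g \<otimes>\<^bsub>H\<^esub> \<gamma> g') \<otimes>\<^bsub>H\<^esub> (\<delta> h \<otimes>\<^bsub>H\<^esub> \<delta> h'))"
          using alh gah dh g g' h h' by (simp add: hom_def)
        also have "\<dots> = (\<alpha> g \<otimes>\<^bsub>G\<^esub> \<alpha> g', (\<gamma> g \<otimes>\<^bsub>H\<^esub> \<delta> h) \<otimes>\<^bsub>H\<^esub> (\<gamma> g' \<otimes>\<^bsub>H\<^esub> \<delta> h'))"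
          unfolding c2 ..
        also have "\<dots> = \<phi> x \<otimes>\<^bsub>XX\<^esub> \<phi> y"
        proof -
          have "\<phi> x = (\<alpha> g, \<gamma> g \<otimes>\<^bsub>H\<^esub> \<delta> h)" using form g h xg by blast
          moreover have "\<phi> y = (\<alpha> g', \<gamma> g' \<otimes>\<^bsub>H\<^esub> \<delta> h')" using form g' h' yg by blast
          ultimately show ?thesis using Xm by simp
        qed
        finally show "\<phi> (x \<otimes>\<^bsub>XX\<^esub> y) = \<phi> x \<otimes>\<^bsub>XX\<^esub> \<phi> y" .
      qed
    next
      show "bij_betw \<phi> (carrier XX) (carrier XX)"
      proof (rule bij_betw_imageI)
        show "inj_on \<phi> (carrier XX)"
        proof (rule inj_onI)
          fix x y assume x: "x \<in> carrier XX" and y: "y \<in> carrier XX" and e: "\<phi> x = \<phi> y"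
          obtain g h where xg: "x = (g, h)" and g: "g \<in> carrier G" and h: "h \<in> carrier H" using x unfolding Xc by blast
          obtain g' h' where yg: "y = (g', h')" and g': "g' \<in> carrier G" and h': "h' \<in> carrier H" using y unfolding Xc by blast
          have "(\<alpha> g, \<gamma> g \<otimes>\<^bsub>H\<^esub> \<delta> h) = (\<alpha> g', \<gamma> g' \<otimes>\<^bsub>H\<^esub> \<delta> h')" using e form g g' h h' unfolding xg yg by simp
          then have e': "\<alpha> g = \<alpha> g'" "\<gamma> g \<otimes>\<^bsub>H\<^esub> \<delta> h = \<gamma> g' \<otimes>\<^bsub>H\<^esub> \<delta> h'" by simp_all
          have gg: "g = g'" using inj_onD[OF ainj e'(1) g g'] .
          then have "\<delta> h = \<delta> h'" using e'(2) gac[OF g] dc[OF h] dc[OF h'] by simp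
          then have "h = h'" using inj_onD[OF dinj _ h h'] by simp
          then show "x = y" using gg xg yg by simp
        qed
        show "\<phi> ` carrier XX = carrier XX"
        proof
          show "\<phi> ` carrier XX \<subseteq> carrier XX"
          proof
            fix y assume "y \<in> \<phi> ` carrier XX"
            then obtain x where x: "x \<in> carrier XX" and y: "y = \<phi> x" by blast
            have fx: "fst x \<in> carrier G" "snd x \<in> carrier H" using x unfolding Xc mem_Times_iff by blast+
            have "(\<alpha> (fst x), \<gamma> (fst x) \<otimes>\<^bsub>H\<^esub> \<delta> (snd x)) \<in> carrier G \<times> carrier H"
              using alc[OF fx(1)] gac[OF fx(1)] dc[OF fx(2)] by (intro SigmaI H.m_closed)
            then show "y \<in> carrier XX" using F[OF x] Xc y by simp
          qed
          show "carrier XX \<subseteq> \<phi> ` carrier XX"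
          proof
            fix x assume x: "x \<in> carrier XX"
            obtain g0 h0 where xg: "x = (g0, h0)" and g0: "g0 \<in> carrier G" and h0: "h0 \<in> carrier H" using x unfolding Xc by blast
            have "g0 \<in> \<alpha> ` carrier G" using asurj g0 by simp
            then obtain g where g: "g \<in> carrier G" "\<alpha> g = g0" by (metis imageE)
            have t: "inv\<^bsub>H\<^esub> (\<gamma> g) \<otimes>\<^bsub>H\<^esub> h0 \<in> carrier H" using gac[OF g(1)] h0 by simp
            have "inv\<^bsub>H\<^esub> (\<gamma> g) \<otimes>\<^bsub>H\<^esub> h0 \<in> \<delta> ` carrier H" using dsurj t by simp
            then obtain h where h: "h \<in> carrier H" "\<delta> h = inv\<^bsub>H\<^esub> (\<gamma> g) \<otimes>\<^bsub>H\<^esub> h0" by (metis imageE)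
            have "\<phi> (g, h) = (g0, \<gamma> g \<otimes>\<^bsub>H\<^esub> (inv\<^bsub>H\<^esub> (\<gamma> g) \<otimes>\<^bsub>H\<^esub> h0))" using form g h by simp
            also have "\<dots> = x" using xg gac[OF g(1)] h0 by (simp add: H.m_assoc[symmetric])
            finally have "\<phi> (g, h) = x" .
            moreover have "(g, h) \<in> carrier XX" using g(1) h(1) Xc by simp
            ultimately show "x \<in> \<phi> ` carrier XX" by (metis image_eqI)
          qed
        qed
      qed
    qed
  qed
  have part2: "\<phi> ` ({\<one>\<^bsub>G\<^esub>} \<times> carrier H) = {\<one>\<^bsub>G\<^esub>} \<times> carrier H" if phi: "\<phi> \<in> iso XX XX" for \<phi>
  proof
    show "\<phi> ` ({\<one>\<^bsub>G\<^esub>} \<times> carrier H) \<subseteq> {\<one>\<^bsub>G\<^esub>} \<times> carrier H"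
    proof
      fix y assume "y \<in> \<phi> ` ({\<one>\<^bsub>G\<^esub>} \<times> carrier H)"
      then obtain h where h: "h \<in> carrier H" and y: "y = \<phi> (\<one>\<^bsub>G\<^esub>, h)" by blast
      have "\<phi> (\<one>\<^bsub>G\<^esub>, h) \<in> carrier XX" using phc[OF phi] h Xc by simp
      then have "snd (\<phi> (\<one>\<^bsub>G\<^esub>, h)) \<in> carrier H" using Xc by (auto simp: mem_Times_iff)
      then show "y \<in> {\<one>\<^bsub>G\<^esub>} \<times> carrier H" using key[OF phi h] y by (simp add: mem_Times_iff)
    qed
    show "{\<one>\<^bsub>G\<^esub>} \<times> carrier H \<subseteq> \<phi> ` ({\<one>\<^bsub>G\<^esub>} \<times> carrier H)"
    proof
      fix y assume "y \<in> {\<one>\<^bsub>G\<^esub>} \<times> carrier H"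
      then obtain h where h: "h \<in> carrier H" and y: "y = (\<one>\<^bsub>G\<^esub>, h)" by blast
      define \<psi> where "\<psi> = inv_into (carrier XX) \<phi>"
      have psX: "\<psi> \<in> iso XX XX" unfolding \<psi>_def by (rule inv_ok[OF phi])
      have x: "y \<in> carrier XX" using h y Xc by simp
      have "\<psi> y \<in> carrier XX" using phc[OF psX x] .
      then have "snd (\<psi> y) \<in> carrier H" using Xc by (auto simp: mem_Times_iff)
      moreover have "\<psi> y = (\<one>\<^bsub>G\<^esub>, snd (\<psi> y))" using key[OF psX h] unfolding y by (metis prod.collapse)
      moreover have "\<phi> (\<psi> y) = y" unfolding \<psi>_def by (rule inv_c[OF phi x])
      ultimately show "y \<in> \<phi> ` ({\<one>\<^bsub>G\<^esub>} \<times> carrier H)" by (metis SigmaI image_eqI singletonI)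
    qed
  qed
  show ?thesis
  proof (intro conjI allI ballI)
    fix \<phi>
    show "\<phi> \<in> iso (G \<times>\<times> H) (G \<times>\<times> H) \<longleftrightarrow>
            (\<exists>\<alpha> \<delta> \<gamma>. \<alpha> \<in> iso G G \<and> \<delta> \<in> iso H H \<and> \<gamma> \<in> hom G H \<and>
               \<gamma> ` carrier G \<subseteq> center H \<and>
               (\<forall>g \<in> carrier G. \<forall>h \<in> carrier H. \<phi> (g, h) = (\<alpha> g, \<gamma> g \<otimes>\<^bsub>H\<^esub> \<delta> h)))"
    proof
      assume "\<phi> \<in> iso (G \<times>\<times> H) (G \<times>\<times> H)"
      then have "\<phi> \<in> iso XX XX" unfolding XX_def .
      then show "\<exists>\<alpha> \<delta> \<gamma>. \<alpha> \<in> iso G G \<and> \<delta> \<in> iso H H \<and> \<gamma> \<in> hom G H \<and>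
               \<gamma> ` carrier G \<subseteq> center H \<and>
               (\<forall>g \<in> carrier G. \<forall>h \<in> carrier H. \<phi> (g, h) = (\<alpha> g, \<gamma> g \<otimes>\<^bsub>H\<^esub> \<delta> h))" by (rule fwd)
    next
      assume "\<exists>\<alpha> \<delta> \<gamma>. \<alpha> \<in> iso G G \<and> \<delta> \<in> iso H H \<and> \<gamma> \<in> hom G H \<and>
               \<gamma> ` carrier G \<subseteq> center H \<and>
               (\<forall>g \<in> carrier G. \<forall>h \<in> carrier H. \<phi> (g, h) = (\<alpha> g, \<gamma> g \<otimes>\<^bsub>H\<^esub> \<delta> h))"
      then obtain \<alpha> \<delta> \<gamma> where A: "\<alpha> \<in> iso G G" "\<delta> \<in> iso H H" "\<gamma> \<in> hom G H"
               "\<gamma> ` carrier G \<subseteq> center H"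
               "\<forall>g \<in> carrier G. \<forall>h \<in> carrier H. \<phi> (g, h) = (\<alpha> g, \<gamma> g \<otimes>\<^bsub>H\<^esub> \<delta> h)" by blast
      have "\<phi> \<in> iso XX XX" by (rule bwd[OF A])
      then show "\<phi> \<in> iso (G \<times>\<times> H) (G \<times>\<times> H)" unfolding XX_def .
    qed
  next
    fix \<phi> assume "\<phi> \<in> iso (G \<times>\<times> H) (G \<times>\<times> H)"
    then have "\<phi> \<in> iso XX XX" unfolding XX_def .
    then show "\<phi> ` ({\<one>\<^bsub>G\<^esub>} \<times> carrier H) = {\<one>\<^bsub>G\<^esub>} \<times> carrier H" by (rule part2)
  qed
qed


end
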